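(* Let $(M,\eta,\xi,\phi,g)$ be a non-K-contact contact metric manifold satisfying the weak $(\kappa,\mu)$ condition $R(X,\xi)\xi=\kappa(X-\eta(X)\xi)+\mu hX$ for real constants $\kappa,\mu$, with Boeckx invariant $I_M=\frac{1-\mu/2}{\sqrt{1-\kappa}}$ satisfying $|I_M|<1$ (so that $1-\kappa-(1-\frac{\mu}{2})^2>0$). Define $$\phi_1=\frac{1}{\sqrt{1-\kappa-(1-\frac{\mu}{2})^2}}\cdot\frac{1}{2\sqrt{1-\kappa}}\big((2-\mu)\phi h+2(1-\kappa)\phi\big).$$ Then $\phi_1^2=-I+\eta\otimes\xi$ and $$h_1:=\tfrac12L_\xi\phi_1=\sqrt{1-I_M^2}\,h .$$
   Context: A contact metric structure $(M,\eta,\xi,\phi,g)$ consists of a contact form $\eta$, its Reeb field $\xi$, a Riemannian metric $g$ and an endomorphism field $\phi$ with $\eta(\xi)=1$, $\phi^2=-\mathrm{Id}+\eta\otimes\xi$, $\phi\xi=0$, $d\eta=2g(\cdot,\phi\cdot)$. $h=\frac12L_\xi\phi$ ($L_\xi$ the Lie derivative along $\xi$); K-contact means $h=0$. $R(X,Y)=[\nabla_X,\nabla_Y]-\nabla_{[X,Y]}$ for the Levi-Civita connection of $g$. For a non-K-contact weak $(\kappa,\mu)$ space, $\kappa<1$. *)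

theory Defs
  imports "HOL-Analysis.Analysis"
begin

text \<open>Local (chart) model: the manifold is an open set U in real^'n, tensor fields are
  written in the coordinates of that chart. Vector fields are maps real^'n => real^'n,
  a 1-form eta is represented by its component vector (eta(X) = eta p \<bullet> X),
  (1,1)-tensor fields phi, h by matrix fields, the metric g by a matrix field
  (g(X,Y) = X \<bullet> (g p *v Y)).\<close>

fun Ck_on :: "nat \<Rightarrow> 'a::real_normed_vector set \<Rightarrow> ('a \<Rightarrow> 'b::real_normed_vector) \<Rightarrow> bool" where
  "Ck_on 0 U f = continuous_on U f"
| "Ck_on (Suc k) U f = ((\<forall>x\<in>U. f differentiable (at x)) \<and>
      (\<forall>v. Ck_on k U (\<lambda>x. frechet_derivative f (at x) v)))"

definition smooth_on :: "'a::real_normed_vector set \<Rightarrow> ('a \<Rightarrow> 'b::real_normed_vector) \<Rightarrow> bool" where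
  "smooth_on U f \<longleftrightarrow> (\<forall>k. Ck_on k U f)"

definition gform :: "(real^'n \<Rightarrow> real^'n^'n) \<Rightarrow> real^'n \<Rightarrow> real^'n \<Rightarrow> real^'n \<Rightarrow> real" where
  "gform g p v w = v \<bullet> (g p *v w)"

text \<open>Christoffel term of the Levi-Civita connection:
  g(Gamma(v,w),z) = 1/2 ((D_v g)(w,z) + (D_w g)(v,z) - (D_z g)(v,w)).\<close>
definition christoffel :: "(real^'n \<Rightarrow> real^'n^'n) \<Rightarrow> real^'n \<Rightarrow> real^'n \<Rightarrow> real^'n \<Rightarrow> real^'n" where
  "christoffel g p v w = matrix_inv (g p) *v
     (\<chi> k. (1/2) * (w \<bullet> (frechet_derivative g (at p) v *v axis k 1)
                  + v \<bullet> (frechet_derivative g (at p) w *v axis k 1)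
                  - v \<bullet> (frechet_derivative g (at p) (axis k 1) *v w)))"

definition nabla :: "(real^'n \<Rightarrow> real^'n^'n) \<Rightarrow> (real^'n \<Rightarrow> real^'n) \<Rightarrow> (real^'n \<Rightarrow> real^'n) \<Rightarrow> real^'n \<Rightarrow> real^'n" where
  "nabla g X Y p = frechet_derivative Y (at p) (X p) + christoffel g p (X p) (Y p)"

definition lie_bracket :: "(real^'n \<Rightarrow> real^'n) \<Rightarrow> (real^'n \<Rightarrow> real^'n) \<Rightarrow> real^'n \<Rightarrow> real^'n" where
  "lie_bracket X Y p = frechet_derivative Y (at p) (X p) - frechet_derivative X (at p) (Y p)"

definition curv :: "(real^'n \<Rightarrow> real^'n^'n) \<Rightarrow> (real^'n \<Rightarrow> real^'n) \<Rightarrow> (real^'n \<Rightarrow> real^'n) \<Rightarrow> (real^'n \<Rightarrow> real^'n) \<Rightarrow> real^'n \<Rightarrow> real^'n" where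
  "curv g X Y Z p = nabla g X (nabla g Y Z) p - nabla g Y (nabla g X Z) p - nabla g (lie_bracket X Y) Z p"

definition jac :: "(real^'n \<Rightarrow> real^'n) \<Rightarrow> real^'n \<Rightarrow> real^'n^'n" where
  "jac X p = matrix (frechet_derivative X (at p))"

text \<open>Lie derivative of a (1,1)-tensor field A along xi, in coordinates:
  (L_xi A) X = [xi, A X] - A [xi, X].\<close>
definition lie_tensor :: "(real^'n \<Rightarrow> real^'n) \<Rightarrow> (real^'n \<Rightarrow> real^'n^'n) \<Rightarrow> real^'n \<Rightarrow> real^'n^'n" where
  "lie_tensor xi A p = frechet_derivative A (at p) (xi p) - jac xi p ** A p + A p ** jac xi p"

text \<open>d eta(v,w) for constant vectors v,w (convention d eta(X,Y) = X eta(Y) - Y eta(X) - eta([X,Y])).\<close>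
definition d_form :: "(real^'n \<Rightarrow> real^'n) \<Rightarrow> real^'n \<Rightarrow> real^'n \<Rightarrow> real^'n \<Rightarrow> real" where
  "d_form eta p v w = frechet_derivative eta (at p) v \<bullet> w - frechet_derivative eta (at p) w \<bullet> v"

definition hten :: "(real^'n \<Rightarrow> real^'n) \<Rightarrow> (real^'n \<Rightarrow> real^'n^'n) \<Rightarrow> real^'n \<Rightarrow> real^'n^'n" where
  "hten xi phi p = (1/2) *\<^sub>R lie_tensor xi phi p"

definition contact_metric_on :: "(real^'n) set \<Rightarrow> (real^'n \<Rightarrow> real^'n) \<Rightarrow> (real^'n \<Rightarrow> real^'n)
    \<Rightarrow> (real^'n \<Rightarrow> real^'n^'n) \<Rightarrow> (real^'n \<Rightarrow> real^'n^'n) \<Rightarrow> bool" where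
  "contact_metric_on U eta xi phi g \<longleftrightarrow>
     open U \<and> smooth_on U eta \<and> smooth_on U xi \<and> smooth_on U phi \<and> smooth_on U g \<and>
     (\<forall>p\<in>U.
        transpose (g p) = g p \<and>
        (\<forall>v. v \<noteq> 0 \<longrightarrow> gform g p v v > 0) \<and>
        eta p \<bullet> xi p = 1 \<and>
        (\<forall>v. d_form eta p (xi p) v = 0) \<and>
        (\<forall>v. phi p *v (phi p *v v) = - v + (eta p \<bullet> v) *\<^sub>R xi p) \<and>
        phi p *v xi p = 0 \<and>
        (\<forall>v. gform g p v (xi p) = eta p \<bullet> v) \<and>
        (\<forall>v w. gform g p (phi p *v v) (phi p *v w) = gform g p v w - (eta p \<bullet> v) * (eta p \<bullet> w)) \<and>
        (\<forall>v w. d_form eta p v w = 2 * gform g p v (phi p *v w)))"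

definition weak_kappa_mu :: "(real^'n) set \<Rightarrow> (real^'n \<Rightarrow> real^'n) \<Rightarrow> (real^'n \<Rightarrow> real^'n)
    \<Rightarrow> (real^'n \<Rightarrow> real^'n^'n) \<Rightarrow> (real^'n \<Rightarrow> real^'n^'n) \<Rightarrow> real \<Rightarrow> real \<Rightarrow> bool" where
  "weak_kappa_mu U eta xi phi g \<kappa> \<mu> \<longleftrightarrow>
     (\<forall>X. smooth_on U X \<longrightarrow> (\<forall>p\<in>U.
        curv g X xi xi p = \<kappa> *\<^sub>R (X p - (eta p \<bullet> X p) *\<^sub>R xi p) + \<mu> *\<^sub>R (hten xi phi p *v X p)))"

end

theory Submission
  imports Defs
begin


abbreviation Dr where "Dr f x \<equiv> frechet_derivative f (at x)"

lemma smooth_has_derivative: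
  assumes "smooth_on U f" "x \<in> U"
  shows "(f has_derivative Dr f x) (at x)"
proof -
  have "Ck_on (Suc 0) U f" using assms(1) unfolding smooth_on_def by blast
  then have "f differentiable (at x)" using assms(2) by simp
  then show ?thesis by (simp add: frechet_derivative_works)
qed

lemma smooth_dir:
  assumes "smooth_on U f" shows "smooth_on U (\<lambda>x. Dr f x v)"
  using assms unfolding smooth_on_def by (metis Ck_on.simps(2))

lemma smooth_cont: "smooth_on U f \<Longrightarrow> continuous_on U f"
  unfolding smooth_on_def by (metis Ck_on.simps(1))

lemma Ck_const: "Ck_on k U (\<lambda>x. c)"
  by (induction k arbitrary: c) auto

lemma smooth_const: "smooth_on U (\<lambda>x. c)"
  unfolding smooth_on_def using Ck_const by blast

lemma linear_Dr: "smooth_on U f \<Longrightarrow> x \<in> U \<Longrightarrow> linear (Dr f x)"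
  using smooth_has_derivative has_derivative_linear by blast

lemma Dr_transform:
  assumes "open U" "x \<in> U" "\<And>y. y \<in> U \<Longrightarrow> f y = g y" "(g has_derivative g') (at x)"
  shows "Dr f x = g'"
proof -
  have "(f has_derivative g') (at x)"
    using has_derivative_transform_within_open[OF assms(4) assms(1) assms(2), of f] assms(3) by metis
  then show ?thesis using frechet_derivative_at by metis
qed

lemma line_deriv:
  fixes f :: "'a::real_normed_vector \<Rightarrow> real"
  assumes "(f has_derivative Df) (at (x + a *\<^sub>R v))"
  shows "((\<lambda>a. f (x + a *\<^sub>R v)) has_field_derivative Df v) (at a)"
proof -
  have l: "((\<lambda>a. x + a *\<^sub>R v) has_derivative (\<lambda>h. h *\<^sub>R v)) (at a)"
    by (auto intro!: derivative_eq_intros)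
  have "((\<lambda>a. f (x + a *\<^sub>R v)) has_derivative (\<lambda>h. Df (h *\<^sub>R v))) (at a)"
    using has_derivative_compose[OF l assms] .
  moreover have "(\<lambda>h. Df (h *\<^sub>R v)) = (*) (Df v)"
    using has_derivative_linear[OF assms] by (auto simp: linear_scale)
  ultimately show ?thesis by (simp add: has_field_derivative_def)
qed

lemma mixed_mvt:
  fixes f :: "'a::real_normed_vector \<Rightarrow> real"
  assumes st: "s > 0" "t > 0"
    and inU: "\<And>a b. 0 \<le> a \<Longrightarrow> a \<le> s \<Longrightarrow> 0 \<le> b \<Longrightarrow> b \<le> t \<Longrightarrow> x + a *\<^sub>R v + b *\<^sub>R w \<in> U"
    and df: "\<And>y. y \<in> U \<Longrightarrow> (f has_derivative Df y) (at y)"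
    and d2: "\<And>y. y \<in> U \<Longrightarrow> ((\<lambda>z. Df z v) has_derivative D2 y) (at y)"
  shows "\<exists>\<sigma> \<tau>. 0 < \<sigma> \<and> \<sigma> < s \<and> 0 < \<tau> \<and> \<tau> < t \<and>
     f (x + s *\<^sub>R v + t *\<^sub>R w) - f (x + s *\<^sub>R v) - f (x + t *\<^sub>R w) + f x
       = s * t * D2 (x + \<sigma> *\<^sub>R v + \<tau> *\<^sub>R w) w"
proof -
  define \<phi> where "\<phi> a = f (x + t *\<^sub>R w + a *\<^sub>R v) - f (x + a *\<^sub>R v)" for a
  have "DERIV \<phi> a :> Df (x + t *\<^sub>R w + a *\<^sub>R v) v - Df (x + a *\<^sub>R v) v" if "0 \<le> a" "a \<le> s" for a
  proof -
    have u1: "x + t *\<^sub>R w + a *\<^sub>R v \<in> U" using inU[of a t] that st by (simp add: algebra_simps)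
    have u2: "x + a *\<^sub>R v \<in> U" using inU[of a 0] that st by simp
    show ?thesis unfolding \<phi>_def
      by (intro derivative_intros line_deriv df u1 u2)
  qed
  from MVT2[OF st(1) this]
  obtain \<sigma> where \<sigma>: "0 < \<sigma>" "\<sigma> < s"
     "\<phi> s - \<phi> 0 = (s - 0) * (Df (x + t *\<^sub>R w + \<sigma> *\<^sub>R v) v - Df (x + \<sigma> *\<^sub>R v) v)" by blast
  define \<psi> where "\<psi> b = Df (x + \<sigma> *\<^sub>R v + b *\<^sub>R w) v" for b
  have "DERIV \<psi> b :> D2 (x + \<sigma> *\<^sub>R v + b *\<^sub>R w) w" if "0 \<le> b" "b \<le> t" for b
  proof -
    have u1: "x + \<sigma> *\<^sub>R v + b *\<^sub>R w \<in> U" using inU[of \<sigma> b] that \<sigma> by simp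
    show ?thesis unfolding \<psi>_def
      by (rule line_deriv[where f="\<lambda>z. Df z v", of _ "x + \<sigma> *\<^sub>R v"]) (rule d2[OF u1])
  qed
  from MVT2[OF st(2) this]
  obtain \<tau> where \<tau>: "0 < \<tau>" "\<tau> < t"
     "\<psi> t - \<psi> 0 = (t - 0) * D2 (x + \<sigma> *\<^sub>R v + \<tau> *\<^sub>R w) w" by blast
  have "f (x + s *\<^sub>R v + t *\<^sub>R w) - f (x + s *\<^sub>R v) - f (x + t *\<^sub>R w) + f x = \<phi> s - \<phi> 0"
    unfolding \<phi>_def by (simp add: algebra_simps)
  also have "\<dots> = s * (\<psi> t - \<psi> 0)"
    using \<sigma>(3) unfolding \<psi>_def by (simp add: algebra_simps)
  also have "\<dots> = s * t * D2 (x + \<sigma> *\<^sub>R v + \<tau> *\<^sub>R w) w" using \<tau>(3) by simp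
  finally show ?thesis using \<sigma> \<tau> by blast
qed

lemma schwarz_scalar:
  fixes f :: "'a::real_normed_vector \<Rightarrow> real"
  assumes U: "open U" "x \<in> U"
    and df: "\<And>y. y \<in> U \<Longrightarrow> (f has_derivative Df y) (at y)"
    and dv: "\<And>y. y \<in> U \<Longrightarrow> ((\<lambda>z. Df z v) has_derivative Dv y) (at y)"
    and dw: "\<And>y. y \<in> U \<Longrightarrow> ((\<lambda>z. Df z w) has_derivative Dw y) (at y)"
    and cv: "continuous_on U (\<lambda>y. Dv y w)"
    and cw: "continuous_on U (\<lambda>y. Dw y v)"
  shows "Dv x w = Dw x v"
proof (rule ccontr)
  assume ne: "Dv x w \<noteq> Dw x v"
  define e where "e = \<bar>Dv x w - Dw x v\<bar> / 2"
  have e: "e > 0" using ne unfolding e_def by simp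
  have "isCont (\<lambda>y. Dv y w) x" using cv U continuous_on_eq_continuous_at by blast
  then obtain d1 where d1: "d1 > 0" "\<And>y. dist y x < d1 \<Longrightarrow> dist (Dv y w) (Dv x w) < e"
    using e unfolding continuous_at_eps_delta by blast
  have "isCont (\<lambda>y. Dw y v) x" using cw U continuous_on_eq_continuous_at by blast
  then obtain d2 where d2: "d2 > 0" "\<And>y. dist y x < d2 \<Longrightarrow> dist (Dw y v) (Dw x v) < e"
    using e unfolding continuous_at_eps_delta by blast
  obtain d3 where d3: "d3 > 0" "ball x d3 \<subseteq> U" using U open_contains_ball by blast
  define d where "d = min d1 (min d2 d3)"
  have d: "d > 0" using d1 d2 d3 unfolding d_def by simp
  define s where "s = d / (2 * (norm v + norm w + 1))"
  have "0 < norm v + norm w + 1" by (simp add: add_nonneg_pos)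
  then have s: "s > 0" using d unfolding s_def by simp
  have close: "dist (x + a *\<^sub>R v + b *\<^sub>R w) x < d" if "0 \<le> a" "a \<le> s" "0 \<le> b" "b \<le> s" for a b
  proof -
    have "dist (x + a *\<^sub>R v + b *\<^sub>R w) x = norm (a *\<^sub>R v + b *\<^sub>R w)" by (simp add: dist_norm)
    also have "\<dots> \<le> a * norm v + b * norm w"
      using norm_triangle_ineq[of "a *\<^sub>R v" "b *\<^sub>R w"] that by simp
    also have "\<dots> \<le> s * norm v + s * norm w"
      using that by (intro add_mono mult_right_mono) auto
    also have "\<dots> = s * (norm v + norm w)" by (simp add: algebra_simps)
    also have "\<dots> < s * (2 * (norm v + norm w + 1))" using s by (intro mult_strict_left_mono) (auto simp: add_nonneg_pos)
    also have "\<dots> = d" unfolding s_def using \<open>0 < norm v + norm w + 1\<close> by simp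
    finally show ?thesis .
  qed
  have inU: "x + a *\<^sub>R v + b *\<^sub>R w \<in> U" if "0 \<le> a" "a \<le> s" "0 \<le> b" "b \<le> s" for a b
    using close[OF that] d3(2) unfolding d_def by (auto simp: dist_commute)
  have inU': "x + a *\<^sub>R w + b *\<^sub>R v \<in> U" if "0 \<le> a" "a \<le> s" "0 \<le> b" "b \<le> s" for a b
    using inU[of b a] that by (simp add: algebra_simps)
  obtain \<sigma>1 \<tau>1 where m1: "0 < \<sigma>1" "\<sigma>1 < s" "0 < \<tau>1" "\<tau>1 < s"
     "f (x + s *\<^sub>R v + s *\<^sub>R w) - f (x + s *\<^sub>R v) - f (x + s *\<^sub>R w) + f x
       = s * s * Dv (x + \<sigma>1 *\<^sub>R v + \<tau>1 *\<^sub>R w) w"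
    using mixed_mvt[OF s s inU df dv] by blast
  obtain \<sigma>2 \<tau>2 where m2: "0 < \<sigma>2" "\<sigma>2 < s" "0 < \<tau>2" "\<tau>2 < s"
     "f (x + s *\<^sub>R w + s *\<^sub>R v) - f (x + s *\<^sub>R w) - f (x + s *\<^sub>R v) + f x
       = s * s * Dw (x + \<sigma>2 *\<^sub>R w + \<tau>2 *\<^sub>R v) v"
    using mixed_mvt[OF s s inU' df dw] by blast
  have "s * s * Dv (x + \<sigma>1 *\<^sub>R v + \<tau>1 *\<^sub>R w) w = s * s * Dw (x + \<sigma>2 *\<^sub>R w + \<tau>2 *\<^sub>R v) v"
    using m1(5) m2(5) by (simp add: algebra_simps)
  then have eq: "Dv (x + \<sigma>1 *\<^sub>R v + \<tau>1 *\<^sub>R w) w = Dw (x + \<tau>2 *\<^sub>R v + \<sigma>2 *\<^sub>R w) v"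
    using s by (simp add: algebra_simps)
  have "dist (Dv (x + \<sigma>1 *\<^sub>R v + \<tau>1 *\<^sub>R w) w) (Dv x w) < e"
    using d1(2) close[of \<sigma>1 \<tau>1] m1 unfolding d_def by auto
  moreover have "dist (Dw (x + \<tau>2 *\<^sub>R v + \<sigma>2 *\<^sub>R w) v) (Dw x v) < e"
    using d2(2) close[of \<tau>2 \<sigma>2] m2 unfolding d_def by auto
  moreover have "\<And>P Q a b::real. \<bar>P - a\<bar> < \<bar>a - b\<bar> / 2 \<Longrightarrow> \<bar>Q - b\<bar> < \<bar>a - b\<bar> / 2 \<Longrightarrow> P = Q \<Longrightarrow> False"
    by (auto simp: abs_if split: if_split_asm)
  ultimately show False using eq unfolding e_def dist_real_def by blast
qed

lemma schwarz:
  fixes f :: "'a::real_normed_vector \<Rightarrow> 'b::real_inner"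
  assumes "smooth_on U f" "open U" "x \<in> U"
  shows "Dr (\<lambda>z. Dr f z v) x w = Dr (\<lambda>z. Dr f z w) x v"
proof -
  have "Dr (\<lambda>z. Dr f z v) x w \<bullet> c = Dr (\<lambda>z. Dr f z w) x v \<bullet> c" for c
  proof (rule schwarz_scalar[where f="\<lambda>y. f y \<bullet> c" and Df="\<lambda>y h. Dr f y h \<bullet> c"
        and Dv="\<lambda>y h. Dr (\<lambda>z. Dr f z v) y h \<bullet> c" and Dw="\<lambda>y h. Dr (\<lambda>z. Dr f z w) y h \<bullet> c",
        OF assms(2,3)])
    fix y assume y: "y \<in> U"
    show "((\<lambda>y. f y \<bullet> c) has_derivative (\<lambda>h. Dr f y h \<bullet> c)) (at y)"
      by (intro derivative_intros smooth_has_derivative[OF assms(1) y])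
    show "((\<lambda>z. Dr f z v \<bullet> c) has_derivative (\<lambda>h. Dr (\<lambda>z. Dr f z v) y h \<bullet> c)) (at y)"
      by (intro derivative_intros smooth_has_derivative[OF smooth_dir[OF assms(1)] y])
    show "((\<lambda>z. Dr f z w \<bullet> c) has_derivative (\<lambda>h. Dr (\<lambda>z. Dr f z w) y h \<bullet> c)) (at y)"
      by (intro derivative_intros smooth_has_derivative[OF smooth_dir[OF assms(1)] y])
  next
    show "continuous_on U (\<lambda>y. Dr (\<lambda>z. Dr f z v) y w \<bullet> c)"
      by (intro continuous_intros smooth_cont[OF smooth_dir[OF smooth_dir[OF assms(1)]]])
    show "continuous_on U (\<lambda>y. Dr (\<lambda>z. Dr f z w) y v \<bullet> c)"
      by (intro continuous_intros smooth_cont[OF smooth_dir[OF smooth_dir[OF assms(1)]]])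
  qed
  then have "\<And>c. (Dr (\<lambda>z. Dr f z v) x w - Dr (\<lambda>z. Dr f z w) x v) \<bullet> c = 0"
    by (simp add: inner_diff_left)
  from this[of "Dr (\<lambda>z. Dr f z v) x w - Dr (\<lambda>z. Dr f z w) x v"] show ?thesis
    by simp
qed




lemma mm_add_rdistrib: "((A::real^'n^'m) + B) ** (C::real^'p^'n) = A ** C + B ** C"
  by (vector matrix_matrix_mult_def sum.distrib[symmetric] field_simps)
lemma mm_diff_rdistrib: "((A::real^'n^'m) - B) ** (C::real^'p^'n) = A ** C - B ** C"
  by (vector matrix_matrix_mult_def sum_subtractf[symmetric] field_simps)
lemma mm_diff_ldistrib: "(A::real^'n^'m) ** ((B::real^'p^'n) - C) = A ** B - A ** C"
  by (vector matrix_matrix_mult_def sum_subtractf[symmetric] field_simps)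
lemma mm_neg_left: "(- (A::real^'n^'m)) ** (C::real^'p^'n) = - (A ** C)"
  by (vector matrix_matrix_mult_def sum_negf[symmetric])
lemma mm_neg_right: "(A::real^'n^'m) ** (- (C::real^'p^'n)) = - (A ** C)"
  by (vector matrix_matrix_mult_def sum_negf[symmetric])

lemma bilinear_mm: "bilinear ((**) :: real^'n^'m \<Rightarrow> real^'p^'n \<Rightarrow> real^'p^'m)"
  unfolding bilinear_def
proof (intro conjI allI)
  fix x :: "real^'n^'m"
  show "linear ((**) x)"
    by (rule linearI) (simp_all add: matrix_add_ldistrib matrix_scalar_ac scalar_matrix_assoc)
next
  fix y :: "real^'p^'n"
  show "linear (\<lambda>x::real^'n^'m. x ** y)"
    by (rule linearI) (simp_all add: mm_add_rdistrib scalar_matrix_assoc[symmetric])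
qed

lemma bb_mm: "bounded_bilinear ((**) :: real^'n^'m \<Rightarrow> real^'p^'n \<Rightarrow> real^'p^'m)"
  using bilinear_mm bilinear_conv_bounded_bilinear by blast

lemma bilinear_mv: "bilinear ((*v) :: real^'n^'m \<Rightarrow> real^'n \<Rightarrow> real^'m)"
  unfolding bilinear_def
proof (intro conjI allI)
  fix x :: "real^'n^'m"
  show "linear ((*v) x)"
    by (rule linearI) (simp_all add: matrix_vector_right_distrib matrix_vector_mult_scaleR)
next
  fix y :: "real^'n"
  show "linear (\<lambda>x::real^'n^'m. x *v y)"
    by (rule linearI) (simp_all add: matrix_vector_mult_add_rdistrib scaleR_matrix_vector_assoc)
qed

lemma bb_mv: "bounded_bilinear ((*v) :: real^'n^'m \<Rightarrow> real^'n \<Rightarrow> real^'m)"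
  using bilinear_mv bilinear_conv_bounded_bilinear by blast

lemmas has_derivative_mm [derivative_intros] = bounded_bilinear.FDERIV[OF bb_mm]
lemmas has_derivative_mv [derivative_intros] = bounded_bilinear.FDERIV[OF bb_mv]

lemma has_derivative_vec_lambda:
  fixes f :: "'a::real_normed_vector \<Rightarrow> 'i::finite \<Rightarrow> 'b::euclidean_space"
  assumes "\<And>i. ((\<lambda>x. f x i) has_derivative f' i) (at a)"
  shows "((\<lambda>x. \<chi> i. f x i) has_derivative (\<lambda>h. \<chi> i. f' i h)) (at a)"
  apply (subst has_derivative_componentwise_within)
  using assms by (auto simp: Basis_vec_def inner_axis intro!: has_derivative_inner_left)

lemma jac_apply: "smooth_on U X \<Longrightarrow> q \<in> U \<Longrightarrow> jac X q *v v = Dr X q v"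
  unfolding jac_def using linear_Dr matrix_vector_mul(2) by metis

lemma smooth_comp_diff:
  fixes f :: "real^'n \<Rightarrow> 'b::real_normed_vector"
  assumes "smooth_on U f" "q \<in> U"
  shows "f differentiable (at q)"
  using smooth_has_derivative[OF assms] differentiable_def by blast

lemma jac_differentiable:
  fixes X :: "real^'n \<Rightarrow> real^'n"
  assumes "smooth_on U X" "q \<in> U"
  shows "(\<lambda>q. jac X q) differentiable (at q)"
proof -
  have "((\<lambda>q. \<chi> i j. Dr X q (axis j 1) $ i) has_derivative
      (\<lambda>h. \<chi> i j. Dr (\<lambda>q. Dr X q (axis j 1)) q h $ i)) (at q)"
    by (intro has_derivative_vec_lambda bounded_linear.has_derivative[OF bounded_linear_vec_nth]
        smooth_has_derivative[OF smooth_dir[OF assms(1)] assms(2)])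
  then show ?thesis unfolding jac_def matrix_def differentiable_def by blast
qed

lemma dir_field_differentiable:
  fixes f :: "real^'n \<Rightarrow> 'b::real_normed_vector" and X :: "real^'n \<Rightarrow> real^'n"
  assumes "smooth_on U f" "smooth_on U X" "open U" "q \<in> U"
  shows "(\<lambda>q. Dr f q (X q)) differentiable (at q)"
proof -
  have eq: "Dr f y (X y) = (\<Sum>i\<in>UNIV. (X y $ i) *\<^sub>R Dr f y (axis i 1))" if "y \<in> U" for y
  proof -
    have "Dr f y (X y) = Dr f y (\<Sum>i\<in>UNIV. (X y $ i) *\<^sub>R axis i 1)"
      using basis_expansion[of "X y"] by (simp add: scalar_mult_eq_scaleR)
    also have "\<dots> = (\<Sum>i\<in>UNIV. (X y $ i) *\<^sub>R Dr f y (axis i 1))"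
      using linear_Dr[OF assms(1) that] by (simp add: linear_sum linear_scale)
    finally show ?thesis .
  qed
  have "(\<lambda>y. \<Sum>i\<in>UNIV. (X y $ i) *\<^sub>R Dr f y (axis i 1)) differentiable (at q)"
  proof (intro differentiable_sum ballI differentiable_scaleR)
    fix i
    show "(\<lambda>y. X y $ i) differentiable at q"
      using bounded_linear.has_derivative[OF bounded_linear_vec_nth smooth_has_derivative[OF assms(2,4)]]
      unfolding differentiable_def by blast
    show "(\<lambda>y. Dr f y (axis i 1)) differentiable at q"
      using smooth_comp_diff[OF smooth_dir[OF assms(1)] assms(4)] .
  qed simp
  then obtain D where "((\<lambda>y. \<Sum>i\<in>UNIV. (X y $ i) *\<^sub>R Dr f y (axis i 1)) has_derivative D) (at q)"
    unfolding differentiable_def by blast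
  then have "((\<lambda>y. Dr f y (X y)) has_derivative D) (at q)"
    by (rule has_derivative_transform_within_open[OF _ assms(3,4)]) (simp add: eq)
  then show ?thesis unfolding differentiable_def by blast
qed


lemma Dr_expand:
  fixes f :: "real^'n \<Rightarrow> 'b::real_normed_vector"
  assumes "smooth_on U f" "y \<in> U"
  shows "Dr f y c = (\<Sum>i\<in>UNIV. (c $ i) *\<^sub>R Dr f y (axis i 1))"
proof -
  have "Dr f y c = Dr f y (\<Sum>i\<in>UNIV. (c $ i) *\<^sub>R axis i 1)"
    using basis_expansion[of c] by (simp add: scalar_mult_eq_scaleR)
  also have "\<dots> = (\<Sum>i\<in>UNIV. (c $ i) *\<^sub>R Dr f y (axis i 1))"
    using linear_Dr[OF assms] by (simp add: linear_sum linear_scale)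
  finally show ?thesis .
qed

lemma Dr_const_dir_deriv:
  fixes f :: "real^'n \<Rightarrow> 'b::real_normed_vector"
  assumes "smooth_on U f" "open U" "q \<in> U"
  shows "((\<lambda>y. Dr f y c) has_derivative (\<lambda>k. \<Sum>i\<in>UNIV. (c $ i) *\<^sub>R Dr (\<lambda>y. Dr f y (axis i 1)) q k)) (at q)"
proof -
  have "((\<lambda>y. \<Sum>i\<in>UNIV. (c $ i) *\<^sub>R Dr f y (axis i 1)) has_derivative
        (\<lambda>k. \<Sum>i\<in>UNIV. (c $ i) *\<^sub>R Dr (\<lambda>y. Dr f y (axis i 1)) q k)) (at q)"
    by (intro has_derivative_sum has_derivative_scaleR_right
        smooth_has_derivative[OF smooth_dir[OF assms(1)] assms(3)])
  then show ?thesis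
    by (rule has_derivative_transform_within_open[OF _ assms(2,3)]) (simp add: Dr_expand[OF assms(1)])
qed

lemma dir_field_deriv:
  fixes f :: "real^'n \<Rightarrow> 'b::real_normed_vector" and X :: "real^'n \<Rightarrow> real^'n"
  assumes "smooth_on U f" "smooth_on U X" "open U" "q \<in> U"
  shows "((\<lambda>y. Dr f y (X y)) has_derivative
           (\<lambda>k. Dr (\<lambda>y. Dr f y (X q)) q k + Dr f q (Dr X q k))) (at q)"
proof -
  have dX: "((\<lambda>y. X y $ i) has_derivative (\<lambda>k. Dr X q k $ i)) (at q)" for i
    by (rule bounded_linear.has_derivative[OF bounded_linear_vec_nth smooth_has_derivative[OF assms(2,4)]])
  have "((\<lambda>y. \<Sum>i\<in>UNIV. (X y $ i) *\<^sub>R Dr f y (axis i 1)) has_derivative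
        (\<lambda>k. \<Sum>i\<in>UNIV. (X q $ i) *\<^sub>R Dr (\<lambda>y. Dr f y (axis i 1)) q k + (Dr X q k $ i) *\<^sub>R Dr f q (axis i 1))) (at q)"
    by (intro has_derivative_sum has_derivative_scaleR dX
        smooth_has_derivative[OF smooth_dir[OF assms(1)] assms(4)])
  moreover have "(\<lambda>k. \<Sum>i\<in>UNIV. (X q $ i) *\<^sub>R Dr (\<lambda>y. Dr f y (axis i 1)) q k + (Dr X q k $ i) *\<^sub>R Dr f q (axis i 1))
      = (\<lambda>k. Dr (\<lambda>y. Dr f y (X q)) q k + Dr f q (Dr X q k))"
  proof
    fix k
    have "Dr (\<lambda>y. Dr f y (X q)) q = (\<lambda>k. \<Sum>i\<in>UNIV. (X q $ i) *\<^sub>R Dr (\<lambda>y. Dr f y (axis i 1)) q k)"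
      using frechet_derivative_at[OF Dr_const_dir_deriv[OF assms(1,3,4)]] by simp
    then show "(\<Sum>i\<in>UNIV. (X q $ i) *\<^sub>R Dr (\<lambda>y. Dr f y (axis i 1)) q k + (Dr X q k $ i) *\<^sub>R Dr f q (axis i 1))
      = Dr (\<lambda>y. Dr f y (X q)) q k + Dr f q (Dr X q k)"
      by (simp add: sum.distrib Dr_expand[OF assms(1,4), of "Dr X q k"])
  qed
  ultimately have "((\<lambda>y. \<Sum>i\<in>UNIV. (X y $ i) *\<^sub>R Dr f y (axis i 1)) has_derivative
           (\<lambda>k. Dr (\<lambda>y. Dr f y (X q)) q k + Dr f q (Dr X q k))) (at q)" by simp
  then show ?thesis
    by (rule has_derivative_transform_within_open[OF _ assms(3,4)]) (simp add: Dr_expand[OF assms(1)])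
qed

lemma linear_transpose_real: "linear (transpose :: real^'n^'m \<Rightarrow> real^'m^'n)"
  by (rule linearI) (simp_all add: transpose_def vec_eq_iff)

lemma bl_transpose: "bounded_linear (transpose :: real^'n^'m \<Rightarrow> real^'m^'n)"
  using linear_transpose_real linear_conv_bounded_linear by blast


lemma mv_neg: "(- A) *v (x::real^'n) = - (A *v x)"
  by (simp add: matrix_vector_mult_def vec_eq_iff sum_negf[symmetric])

lemma mv_neg_right: "A *v (- x) = - (A *v (x::real^'n))"
  by (simp add: matrix_vector_mult_def vec_eq_iff sum_negf[symmetric])

lemma mv_scaleR: "(c *\<^sub>R A) *v (x::real^'n) = c *\<^sub>R (A *v x)"
  by (simp add: scaleR_matrix_vector_assoc)

lemma differentiable_mm:
  fixes A :: "'a::real_normed_vector \<Rightarrow> real^'n^'m" and B :: "'a \<Rightarrow> real^'p^'n"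
  shows "A differentiable (at q) \<Longrightarrow> B differentiable (at q) \<Longrightarrow> (\<lambda>y. A y ** B y) differentiable (at q)"
proof -
  assume "A differentiable (at q)" "B differentiable (at q)"
  then have "(A has_derivative Dr A q) (at q)" "(B has_derivative Dr B q) (at q)"
    by (simp_all add: frechet_derivative_works)
  from has_derivative_mm[OF this] show ?thesis unfolding differentiable_def by blast
qed

lemma Dr_mm:
  fixes A :: "'a::real_normed_vector \<Rightarrow> real^'n^'m" and B :: "'a \<Rightarrow> real^'p^'n"
  assumes "A differentiable (at q)" "B differentiable (at q)"
  shows "Dr (\<lambda>y. A y ** B y) q k = A q ** Dr B q k + Dr A q k ** B q"
proof -
  have "((\<lambda>y. A y ** B y) has_derivative (\<lambda>k. A q ** Dr B q k + Dr A q k ** B q)) (at q)"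
    using has_derivative_mm[OF assms(1)[unfolded frechet_derivative_works] assms(2)[unfolded frechet_derivative_works]] .
  from fun_cong[OF frechet_derivative_at[OF this], of k] show ?thesis by simp
qed

lemma Dr_add:
  fixes A B :: "'a::real_normed_vector \<Rightarrow> 'b::real_normed_vector"
  assumes "A differentiable (at q)" "B differentiable (at q)"
  shows "Dr (\<lambda>y. A y + B y) q k = Dr A q k + Dr B q k"
proof -
  have "((\<lambda>y. A y + B y) has_derivative (\<lambda>k. Dr A q k + Dr B q k)) (at q)"
    using has_derivative_add[OF assms(1)[unfolded frechet_derivative_works] assms(2)[unfolded frechet_derivative_works]] .
  from fun_cong[OF frechet_derivative_at[OF this], of k] show ?thesis by simp
qed

lemma Dr_neg:
  fixes A :: "'a::real_normed_vector \<Rightarrow> 'b::real_normed_vector"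
  assumes "A differentiable (at q)"
  shows "Dr (\<lambda>y. - A y) q k = - Dr A q k"
proof -
  have "((\<lambda>y. - A y) has_derivative (\<lambda>k. - Dr A q k)) (at q)"
    using has_derivative_minus[OF assms(1)[unfolded frechet_derivative_works]] .
  from fun_cong[OF frechet_derivative_at[OF this], of k] show ?thesis by simp
qed

lemma Dr_scale:
  fixes A :: "'a::real_normed_vector \<Rightarrow> 'b::real_normed_vector"
  assumes "A differentiable (at q)"
  shows "Dr (\<lambda>y. c *\<^sub>R A y) q k = c *\<^sub>R Dr A q k"
proof -
  have "((\<lambda>y. c *\<^sub>R A y) has_derivative (\<lambda>k. c *\<^sub>R Dr A q k)) (at q)"
    using has_derivative_scaleR_right[OF assms(1)[unfolded frechet_derivative_works]] .
  from fun_cong[OF frechet_derivative_at[OF this], of k] show ?thesis by simp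
qed

lemma lie_mm:
  assumes "A differentiable (at q)" "B differentiable (at q)"
  shows "lie_tensor xi (\<lambda>y. A y ** B y) q = lie_tensor xi A q ** B q + A q ** lie_tensor xi B q"
  unfolding lie_tensor_def Dr_mm[OF assms] matrix_eq
  by (simp add: matrix_vector_mult_add_rdistrib matrix_vector_mult_diff_rdistrib
      matrix_vector_mul_assoc[symmetric] matrix_vector_right_distrib matrix_vector_mult_diff_distrib)

lemma lie_add:
  assumes "A differentiable (at q)" "B differentiable (at q)"
  shows "lie_tensor xi (\<lambda>y. A y + B y) q = lie_tensor xi A q + lie_tensor xi B q"
  unfolding lie_tensor_def Dr_add[OF assms] matrix_eq
  by (simp add: matrix_vector_mult_add_rdistrib matrix_vector_mult_diff_rdistrib
      matrix_vector_mul_assoc[symmetric] matrix_vector_right_distrib matrix_vector_mult_diff_distrib)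

lemma lie_neg:
  assumes "A differentiable (at q)"
  shows "lie_tensor xi (\<lambda>y. - A y) q = - lie_tensor xi A q"
  unfolding lie_tensor_def Dr_neg[OF assms] matrix_eq
  by (simp add: matrix_vector_mult_add_rdistrib matrix_vector_mult_diff_rdistrib
      matrix_vector_mul_assoc[symmetric] mv_neg mv_neg_right)

lemma lie_scale:
  assumes "A differentiable (at q)"
  shows "lie_tensor xi (\<lambda>y. c *\<^sub>R A y) q = c *\<^sub>R lie_tensor xi A q"
  unfolding lie_tensor_def Dr_scale[OF assms] matrix_eq
  by (simp add: matrix_vector_mult_add_rdistrib matrix_vector_mult_diff_rdistrib
      matrix_vector_mul_assoc[symmetric] mv_scaleR matrix_vector_mult_scaleR scaleR_add_right scaleR_diff_right)



lemma inner_mv_transpose: "(v::real^'n) \<bullet> (A *v w) = (transpose A *v v) \<bullet> w"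
  by (simp add: dot_lmul_matrix)

lemma sym_form: "transpose A = A \<Longrightarrow> (v::real^'n) \<bullet> (A *v w) = w \<bullet> (A *v v)"
  by (metis inner_mv_transpose inner_commute)



lemmas mv_simps = matrix_vector_mult_add_rdistrib matrix_vector_mult_diff_rdistrib mv_neg mv_scaleR
  matrix_vector_mul_assoc[symmetric]

lemma deriv_zero:
  assumes "open U" "q \<in> U" "\<And>y. y \<in> U \<Longrightarrow> F y = c" "(F has_derivative F') (at q)"
  shows "F' k = 0"
proof -
  have "Dr F q = (\<lambda>_. 0)"
    using Dr_transform[OF assms(1,2), of F "\<lambda>_. c"] assms(3) by simp
  moreover have "Dr F q = F'" using frechet_derivative_at[OF assms(4)] by simp
  ultimately show ?thesis by simp
qed

lemma lie_apply:
  assumes "smooth_on U xi" "q \<in> U"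
  shows "lie_tensor xi A q *v v = Dr A q (xi q) *v v - Dr xi q (A q *v v) + A q *v Dr xi q v"
  unfolding lie_tensor_def
  by (simp add: mv_simps jac_apply[OF assms])

locale cms =
  fixes U :: "(real^'n) set" and eta xi :: "real^'n \<Rightarrow> real^'n" and phi g :: "real^'n \<Rightarrow> real^'n^'n"
  assumes cm: "contact_metric_on U eta xi phi g"
begin

lemma openU: "open U" and sm_eta: "smooth_on U eta" and sm_xi: "smooth_on U xi"
  and sm_phi: "smooth_on U phi" and sm_g: "smooth_on U g"
  using cm unfolding contact_metric_on_def by auto

abbreviation h where "h q \<equiv> hten xi phi q"

lemma gsym: "q \<in> U \<Longrightarrow> transpose (g q) = g q"
  and gpos: "q \<in> U \<Longrightarrow> v \<noteq> 0 \<Longrightarrow> v \<bullet> (g q *v v) > 0"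
  and eta_xi: "q \<in> U \<Longrightarrow> eta q \<bullet> xi q = 1"
  and deta_xi: "q \<in> U \<Longrightarrow> d_form eta q (xi q) v = 0"
  and phi2: "q \<in> U \<Longrightarrow> phi q *v (phi q *v v) = - v + (eta q \<bullet> v) *\<^sub>R xi q"
  and phi_xi: "q \<in> U \<Longrightarrow> phi q *v xi q = 0"
  and g_xi: "q \<in> U \<Longrightarrow> v \<bullet> (g q *v xi q) = eta q \<bullet> v"
  and g_phi: "q \<in> U \<Longrightarrow> (phi q *v v) \<bullet> (g q *v (phi q *v w)) = v \<bullet> (g q *v w) - (eta q \<bullet> v) * (eta q \<bullet> w)"
  and deta_phi: "q \<in> U \<Longrightarrow> d_form eta q v w = 2 * (v \<bullet> (g q *v (phi q *v w)))"
  using cm unfolding contact_metric_on_def gform_def by auto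

lemma eta_phi: "q \<in> U \<Longrightarrow> eta q \<bullet> (phi q *v v) = 0"
proof -
  assume q: "q \<in> U"
  have "phi q *v (phi q *v (phi q *v v)) = - (phi q *v v) + (eta q \<bullet> (phi q *v v)) *\<^sub>R xi q"
    by (rule phi2[OF q])
  moreover have "phi q *v (phi q *v (phi q *v v)) = - (phi q *v v)"
    by (simp add: phi2[OF q] matrix_vector_right_distrib matrix_vector_mult_scaleR phi_xi[OF q] mv_neg_right matrix_vector_mult_diff_distrib)
  ultimately have "(eta q \<bullet> (phi q *v v)) *\<^sub>R xi q = 0" by simp
  then show ?thesis using eta_xi[OF q] by auto
qed

context
  fixes q assumes q: "q \<in> U"
begin

lemma gs: "v \<bullet> (g q *v w) = w \<bullet> (g q *v v)"
  using sym_form[OF gsym[OF q]] .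

lemma lin_eta: "linear (Dr eta q)" and lin_xi: "linear (Dr xi q)"
  and lin_phi: "linear (Dr phi q)" and lin_g: "linear (Dr g q)"
  using linear_Dr q sm_eta sm_xi sm_phi sm_g by blast+

lemmas lin_simps = linear_add[OF lin_eta] linear_add[OF lin_xi] linear_add[OF lin_phi] linear_add[OF lin_g]
  linear_diff[OF lin_eta] linear_diff[OF lin_xi] linear_diff[OF lin_phi] linear_diff[OF lin_g]
  linear_neg[OF lin_eta] linear_neg[OF lin_xi] linear_neg[OF lin_phi] linear_neg[OF lin_g]
  linear_scale[OF lin_eta] linear_scale[OF lin_xi] linear_scale[OF lin_phi] linear_scale[OF lin_g]
  linear_0[OF lin_eta] linear_0[OF lin_xi] linear_0[OF lin_phi] linear_0[OF lin_g]

lemma d_eta: "(eta has_derivative Dr eta q) (at q)" and d_xi: "(xi has_derivative Dr xi q) (at q)"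
  and d_phi: "(phi has_derivative Dr phi q) (at q)" and d_g: "(g has_derivative Dr g q) (at q)"
  using smooth_has_derivative q sm_eta sm_xi sm_phi sm_g by blast+

lemma lie_eta: "Dr eta q (xi q) \<bullet> v + eta q \<bullet> Dr xi q v = 0"
proof -
  have "((\<lambda>y. eta y \<bullet> xi y) has_derivative (\<lambda>k. eta q \<bullet> Dr xi q k + Dr eta q k \<bullet> xi q)) (at q)"
    by (rule has_derivative_inner[OF d_eta d_xi])
  from deriv_zero[OF openU q _ this, of 1 v] have "eta q \<bullet> Dr xi q v + Dr eta q v \<bullet> xi q = 0"
    using eta_xi by blast
  moreover have "Dr eta q (xi q) \<bullet> v - Dr eta q v \<bullet> xi q = 0"
    using deta_xi[OF q, of v] unfolding d_form_def .
  ultimately show ?thesis by linarith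
qed


lemma h_apply: "h q *v v = (1/2) *\<^sub>R (Dr phi q (xi q) *v v - Dr xi q (phi q *v v) + phi q *v Dr xi q v)"
  unfolding hten_def by (simp add: mv_scaleR lie_apply[OF sm_xi q])

lemma h_xi: "h q *v xi q = 0"
proof -
  note D = has_derivative_mv[OF d_phi d_xi]
  from deriv_zero[OF openU q _ D, of 0 "xi q"]
  have e: "phi q *v Dr xi q (xi q) + Dr phi q (xi q) *v xi q = 0" using phi_xi by blast
  show ?thesis using e by (simp add: h_apply phi_xi[OF q] lin_simps add.commute)
qed

lemma anti: "phi q *v (h q *v v) + h q *v (phi q *v v) = 0"
proof -
  note D1 = has_derivative_mv[OF d_phi has_derivative_mv[OF d_phi has_derivative_const[of v]]]
  note D2 = has_derivative_scaleR[OF has_derivative_inner[OF d_eta has_derivative_const[of v]] d_xi]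
  note D = has_derivative_diff[OF D1 D2]
  from deriv_zero[OF openU q _ D, of "- v" "xi q"]
  have e: "phi q *v (Dr phi q (xi q) *v v) + Dr phi q (xi q) *v (phi q *v v)
      - ((eta q \<bullet> v) *\<^sub>R Dr xi q (xi q) + (Dr eta q (xi q) \<bullet> v) *\<^sub>R xi q) = 0"
    using phi2 by (simp add: algebra_simps)
  have a: "phi q *v (phi q *v Dr xi q v) = - Dr xi q v + (eta q \<bullet> Dr xi q v) *\<^sub>R xi q"
    by (rule phi2[OF q])
  have b: "Dr xi q (phi q *v (phi q *v v)) = - Dr xi q v + (eta q \<bullet> v) *\<^sub>R Dr xi q (xi q)"
    by (simp add: phi2[OF q] lin_simps)
  have "2 *\<^sub>R (phi q *v (h q *v v) + h q *v (phi q *v v))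
     = (phi q *v (Dr phi q (xi q) *v v) + Dr phi q (xi q) *v (phi q *v v))
       + phi q *v (phi q *v Dr xi q v) - Dr xi q (phi q *v (phi q *v v))"
    by (simp add: h_apply matrix_vector_right_distrib matrix_vector_mult_diff_distrib
        matrix_vector_mult_scaleR algebra_simps)
  also have "\<dots> = (Dr eta q (xi q) \<bullet> v + eta q \<bullet> Dr xi q v) *\<^sub>R xi q"
    using e unfolding a b by (simp add: algebra_simps)
  also have "\<dots> = 0" by (simp add: lie_eta)
  finally show ?thesis by simp
qed

lemma eta_h: "eta q \<bullet> (h q *v v) = 0"
proof -
  note D = has_derivative_inner[OF d_eta has_derivative_mv[OF d_phi has_derivative_const[of v]]]
  from deriv_zero[OF openU q _ D, of 0 "xi q"]
  have e: "eta q \<bullet> (phi q *v 0 + Dr phi q (xi q) *v v) + Dr eta q (xi q) \<bullet> (phi q *v v) = 0"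
    using eta_phi by blast
  have "2 * (eta q \<bullet> (h q *v v)) = eta q \<bullet> (Dr phi q (xi q) *v v) - eta q \<bullet> Dr xi q (phi q *v v)"
    by (simp add: h_apply inner_add_right inner_diff_right eta_phi[OF q])
  also have "\<dots> = - (Dr eta q (xi q) \<bullet> (phi q *v v) + eta q \<bullet> Dr xi q (phi q *v v))"
    using e by simp
  also have "\<dots> = 0" by (simp add: lie_eta)
  finally show ?thesis by simp
qed


lemma Dg_sym: "transpose (Dr g q k) = Dr g q k"
proof -
  note D = has_derivative_diff[OF bounded_linear.has_derivative[OF bl_transpose d_g] d_g]
  from deriv_zero[OF openU q _ D, of 0 k] show ?thesis using gsym by simp
qed

lemma Dgs: "v \<bullet> (Dr g q k *v w) = w \<bullet> (Dr g q k *v v)"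
  using sym_form[OF Dg_sym] .

end

definition G where
  "G q v w = v \<bullet> (Dr g q (xi q) *v w) + Dr xi q v \<bullet> (g q *v w) + v \<bullet> (g q *v Dr xi q w)"

context
  fixes q assumes q: "q \<in> U"
begin

lemma G_sym: "G q v w = G q w v"
  unfolding G_def using Dgs[OF q, of v "xi q" w] gs[OF q, of "Dr xi q v" w] gs[OF q, of v "Dr xi q w"]
  by (simp add: algebra_simps)

lemma G_xi: "G q v (xi q) = 0"
proof -
  note D = has_derivative_diff[OF has_derivative_inner[OF has_derivative_const[of v] has_derivative_mv[OF d_g[OF q] d_xi[OF q]]]
      has_derivative_inner[OF d_eta[OF q] has_derivative_const[of v]]]
  from deriv_zero[OF openU q _ D, of 0 "xi q"]
  have e: "v \<bullet> (g q *v Dr xi q (xi q) + Dr g q (xi q) *v xi q) - Dr eta q (xi q) \<bullet> v = 0"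
    using g_xi by simp
  have "G q v (xi q) = Dr eta q (xi q) \<bullet> v + eta q \<bullet> Dr xi q v"
    using e g_xi[OF q, of "Dr xi q v"] unfolding G_def by (simp add: inner_add_right algebra_simps)
  also have "\<dots> = 0" using lie_eta[OF q] .
  finally show ?thesis .
qed

lemma G_lin2: "G q v (- w + c *\<^sub>R z) = - G q v w + c * G q v z"
  unfolding G_def
  by (simp add: lin_simps[OF q] matrix_vector_right_distrib matrix_vector_mult_scaleR mv_neg_right
      inner_add_right algebra_simps)

lemma G_phi: "G q v (phi q *v w) = - 2 * (v \<bullet> (g q *v (h q *v w)))"
proof -
  define D2e where "D2e a k = Dr (\<lambda>y. Dr eta y a) q k" for a k
  define D2x where "D2x a k = Dr (\<lambda>y. Dr xi y a) q k" for a k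
  have dde: "((\<lambda>y. Dr eta y a) has_derivative D2e a) (at q)" for a
    unfolding D2e_def by (rule smooth_has_derivative[OF smooth_dir[OF sm_eta] q])
  have ddx: "((\<lambda>y. Dr xi y a) has_derivative D2x a) (at q)" for a
    unfolding D2x_def by (rule smooth_has_derivative[OF smooth_dir[OF sm_xi] q])
  have schx: "D2x a b = D2x b a" for a b
    unfolding D2x_def by (rule schwarz[OF sm_xi openU q])
  have sche: "D2e a b = D2e b a" for a b
    unfolding D2e_def by (rule schwarz[OF sm_eta openU q])
  note DA = has_derivative_diff[OF has_derivative_diff[OF has_derivative_inner[OF dde[of v] has_derivative_const[of w]]
      has_derivative_inner[OF dde[of w] has_derivative_const[of v]]]
      has_derivative_mult[OF has_derivative_const[of 2]
        has_derivative_inner[OF has_derivative_const[of v] has_derivative_mv[OF d_g[OF q] has_derivative_mv[OF d_phi[OF q] has_derivative_const[of w]]]]]]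
  from deriv_zero[OF openU q _ DA, of 0 "xi q"]
  have al: "D2e v (xi q) \<bullet> w - D2e w (xi q) \<bullet> v
      - 2 * (v \<bullet> (g q *v (Dr phi q (xi q) *v w)) + v \<bullet> (Dr g q (xi q) *v (phi q *v w))) = 0"
    using deta_phi unfolding d_form_def by (simp add: inner_add_right)
  have beta: "(D2e b (xi q) + Dr eta q (Dr xi q b)) \<bullet> a + eta q \<bullet> D2x a b + Dr eta q b \<bullet> Dr xi q a = 0" for a b
  proof -
    note DB = has_derivative_add[OF has_derivative_inner[OF dir_field_deriv[OF sm_eta sm_xi openU q] has_derivative_const[of a]]
      has_derivative_inner[OF d_eta[OF q] ddx[of a]]]
    from deriv_zero[OF openU q _ DB, of 0 b]
    have "(Dr (\<lambda>y. Dr eta y (xi q)) q b + Dr eta q (Dr xi q b)) \<bullet> a + (eta q \<bullet> D2x a b + Dr eta q b \<bullet> Dr xi q a) = 0"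
      using lie_eta by simp
    then show ?thesis using sche[of "xi q" b] unfolding D2e_def by (simp add: algebra_simps)
  qed
  have bb: "D2e v (xi q) \<bullet> w - D2e w (xi q) \<bullet> v
     = - (Dr eta q (Dr xi q v) \<bullet> w - Dr eta q w \<bullet> Dr xi q v) - (Dr eta q v \<bullet> Dr xi q w - Dr eta q (Dr xi q w) \<bullet> v)"
    using beta[of w v] beta[of v w] schx[of v w] by (simp add: inner_add_left algebra_simps)
  have dd: "Dr eta q (Dr xi q v) \<bullet> w - Dr eta q w \<bullet> Dr xi q v = 2 * (Dr xi q v \<bullet> (g q *v (phi q *v w)))"
      "Dr eta q v \<bullet> Dr xi q w - Dr eta q (Dr xi q w) \<bullet> v = 2 * (v \<bullet> (g q *v (phi q *v Dr xi q w)))"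
    using deta_phi[OF q] unfolding d_form_def by auto
  have "2 * (G q v (phi q *v w) + 2 * (v \<bullet> (g q *v (h q *v w))))
     = 2 * (v \<bullet> (Dr g q (xi q) *v (phi q *v w)) + v \<bullet> (g q *v (Dr phi q (xi q) *v w))
        + Dr xi q v \<bullet> (g q *v (phi q *v w)) + v \<bullet> (g q *v (phi q *v Dr xi q w)))"
    unfolding G_def h_apply[OF q]
    by (simp add: matrix_vector_right_distrib matrix_vector_mult_diff_distrib matrix_vector_mult_scaleR
        inner_add_right inner_diff_right algebra_simps)
  also have "\<dots> = 0" using al bb dd by (simp add: algebra_simps)
  finally show ?thesis by simp
qed

lemma G_formula: "G q v w = - 2 * (v \<bullet> (g q *v (phi q *v (h q *v w))))"
proof -
  have "G q v (phi q *v (phi q *v w)) = - G q v w"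
    using G_lin2[of v w "eta q \<bullet> w" "xi q"] G_xi by (simp add: phi2[OF q])
  moreover have "G q v (phi q *v (phi q *v w)) = - 2 * (v \<bullet> (g q *v (h q *v (phi q *v w))))"
    by (rule G_phi)
  moreover have "h q *v (phi q *v w) = - (phi q *v (h q *v w))"
    using anti[OF q, of w] by (simp add: eq_neg_iff_add_eq_0 add.commute)
  ultimately show ?thesis by (simp add: mv_neg_right)
qed


lemma g_nondeg: "(\<And>z. z \<bullet> (g q *v x) = z \<bullet> (g q *v y)) \<Longrightarrow> x = y"
proof -
  assume a: "\<And>z. z \<bullet> (g q *v x) = z \<bullet> (g q *v y)"
  have "(x - y) \<bullet> (g q *v (x - y)) = 0"
    using a[of "x - y"] by (simp add: matrix_vector_mult_diff_distrib inner_diff_right)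
  then show "x = y" using gpos[OF q, of "x - y"] by (cases "x - y = 0") auto
qed

lemma g_inv: "g q ** matrix_inv (g q) = mat 1"
proof -
  have "inj ((*v) (g q))"
  proof (rule injI)
    fix x y assume "g q *v x = g q *v y"
    then show "x = y" by (intro g_nondeg) simp
  qed
  then have "invertible (g q)"
    using matrix_left_invertible_injective invertible_left_inverse by blast
  then have "\<exists>A'. g q ** A' = mat 1 \<and> A' ** g q = mat 1" unfolding invertible_def .
  then show ?thesis unfolding matrix_inv_def by (metis (mono_tags, lifting) someI_ex)
qed

lemma inner_chi_linear:
  fixes F :: "real^'n \<Rightarrow> real"
  assumes "linear F"
  shows "z \<bullet> (\<chi> k. F (axis k 1)) = F z"
proof -
  have "z \<bullet> (\<chi> k. F (axis k 1)) = (\<Sum>k\<in>UNIV. z $ k * F (axis k 1))"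
    by (simp add: inner_vec_def)
  also have "\<dots> = F (\<Sum>k\<in>UNIV. (z $ k) *\<^sub>R axis k 1)"
    using assms by (simp add: linear_sum linear_scale)
  also have "\<dots> = F z" using basis_expansion[of z] by (simp add: scalar_mult_eq_scaleR)
  finally show ?thesis .
qed

lemma christoffel_form:
  "z \<bullet> (g q *v christoffel g q v w)
     = (1/2) * (w \<bullet> (Dr g q v *v z) + v \<bullet> (Dr g q w *v z) - v \<bullet> (Dr g q z *v w))"
proof -
  have lin: "linear (\<lambda>u. (1/2) * (w \<bullet> (Dr g q v *v u) + v \<bullet> (Dr g q w *v u) - v \<bullet> (Dr g q u *v w)))"
    by (rule linearI)
       (simp_all add: lin_simps[OF q] matrix_vector_right_distrib matrix_vector_mult_scaleR
        matrix_vector_mult_add_rdistrib mv_scaleR inner_add_right algebra_simps)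
  have "g q *v christoffel g q v w = (\<chi> k. (1/2) * (w \<bullet> (Dr g q v *v axis k 1) + v \<bullet> (Dr g q w *v axis k 1)
        - v \<bullet> (Dr g q (axis k 1) *v w)))"
    unfolding christoffel_def by (simp add: matrix_vector_mul_assoc g_inv)
  then show ?thesis using inner_chi_linear[OF lin, of z] by simp
qed

lemma christoffel_sym: "christoffel g q v w = christoffel g q w v"
proof (rule g_nondeg)
  fix z show "z \<bullet> (g q *v christoffel g q v w) = z \<bullet> (g q *v christoffel g q w v)"
    unfolding christoffel_form using Dgs[OF q, of v z w]
    by (simp add: algebra_simps)
qed

lemma nabla_xi: "Dr xi q v + christoffel g q v (xi q) = - (phi q *v v) - phi q *v (h q *v v)"
proof (rule g_nondeg)
  fix z
  have R: "u \<bullet> (g q *v Dr xi q k + Dr g q k *v xi q) = Dr eta q k \<bullet> u" for u k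
  proof -
    note D = has_derivative_diff[OF has_derivative_inner[OF has_derivative_const[of u] has_derivative_mv[OF d_g[OF q] d_xi[OF q]]]
      has_derivative_inner[OF d_eta[OF q] has_derivative_const[of u]]]
    from deriv_zero[OF openU q _ D, of 0 k] show ?thesis using g_xi by simp
  qed
  have Gz: "G q v z = - 2 * (z \<bullet> (g q *v (phi q *v (h q *v v))))"
    using G_sym[of v z] G_formula[of z v] by simp
  have dz: "Dr eta q v \<bullet> z - Dr eta q z \<bullet> v = - 2 * (z \<bullet> (g q *v (phi q *v v)))"
    using deta_phi[OF q, of z v] unfolding d_form_def by simp
  have "2 * (z \<bullet> (g q *v (Dr xi q v + christoffel g q v (xi q)))) = G q v z + (Dr eta q v \<bullet> z - Dr eta q z \<bullet> v)"
    unfolding G_def using R[of z v] R[of v z] gs[OF q, of "Dr xi q v" z] Dgs[OF q, of z v "xi q"]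
      christoffel_form[of z v "xi q"]
    by (simp add: matrix_vector_right_distrib inner_add_right inner_add_left algebra_simps)
  also have "\<dots> = 2 * (z \<bullet> (g q *v (- (phi q *v v) - phi q *v (h q *v v))))"
    unfolding Gz dz by (simp add: matrix_vector_mult_diff_distrib mv_neg_right inner_diff_right)
  finally show "z \<bullet> (g q *v (Dr xi q v + christoffel g q v (xi q))) = z \<bullet> (g q *v (- (phi q *v v) - phi q *v (h q *v v)))"
    by simp
qed


lemma christ_0: "christoffel g q v 0 = 0"
proof (rule g_nondeg)
  fix z show "z \<bullet> (g q *v christoffel g q v 0) = z \<bullet> (g q *v 0)"
    unfolding christoffel_form by (simp add: lin_simps[OF q])
qed

end

lemma h_diff: "q \<in> U \<Longrightarrow> hten xi phi differentiable (at q)"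
proof -
  assume q: "q \<in> U"
  have "(\<lambda>y. (1/2) *\<^sub>R (Dr phi y (xi y) - jac xi y ** phi y + phi y ** jac xi y)) differentiable (at q)"
    by (intro differentiable_scaleR differentiable_const differentiable_add differentiable_diff differentiable_mm
        dir_field_differentiable[OF sm_phi sm_xi openU q] jac_differentiable[OF sm_xi q] smooth_comp_diff[OF sm_phi q])
  then show ?thesis unfolding hten_def[abs_def] lie_tensor_def by simp
qed

lemma phi_diff: "q \<in> U \<Longrightarrow> phi differentiable (at q)"
  using smooth_comp_diff[OF sm_phi] .

definition Am where "Am y = - (phi y + phi y ** hten xi phi y)"

lemma Am_diff: "q \<in> U \<Longrightarrow> Am differentiable (at q)"
proof -
  assume q: "q \<in> U"
  have "(\<lambda>y. - (phi y + phi y ** hten xi phi y)) differentiable (at q)"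
    by (intro differentiable_minus differentiable_add differentiable_mm phi_diff[OF q] h_diff[OF q])
  then show ?thesis unfolding Am_def[abs_def] .
qed

lemma Am_apply: "Am y *v v = - (phi y *v v) - phi y *v (h y *v v)"
  unfolding Am_def by (simp add: mv_neg matrix_vector_mult_add_rdistrib matrix_vector_mult_diff_rdistrib matrix_vector_mul_assoc[symmetric])

lemma nabla_const: "y \<in> U \<Longrightarrow> nabla g (\<lambda>_. v) xi y = Am y *v v"
  unfolding nabla_def Am_apply using nabla_xi by simp

lemma nabla_xixi: "y \<in> U \<Longrightarrow> nabla g xi xi y = 0"
  unfolding nabla_def using nabla_xi[of y "xi y"] by (simp add: phi_xi h_xi)

lemma lie_zero:
  assumes "q \<in> U" "\<And>y. y \<in> U \<Longrightarrow> F y = 0"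
  shows "lie_tensor xi F q = 0"
proof -
  have "Dr F q = (\<lambda>_. 0)"
    using Dr_transform[OF openU assms(1), of F "\<lambda>_. 0"] assms(2) by simp
  then show ?thesis unfolding lie_tensor_def using assms by simp
qed

context
  fixes q assumes q: "q \<in> U"
begin

lemma curv_formula: "curv g (\<lambda>_. v) xi xi q = - (lie_tensor xi Am q *v v) - Am q *v (Am q *v v)"
proof -
  have T1: "nabla g (\<lambda>_. v) (nabla g xi xi) q = 0"
  proof -
    have "Dr (nabla g xi xi) q = (\<lambda>_. 0)"
      using Dr_transform[OF openU q, of "nabla g xi xi" "\<lambda>_. 0"] nabla_xixi by simp
    then show ?thesis unfolding nabla_def[of g "\<lambda>_. v" "nabla g xi xi"]
      using nabla_xixi[OF q] christ_0[OF q] by simp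
  qed
  have dAm: "(Am has_derivative Dr Am q) (at q)" using Am_diff[OF q] frechet_derivative_works by blast
  have "Dr (nabla g (\<lambda>_. v) xi) q = (\<lambda>k. Am q *v 0 + Dr Am q k *v v)"
    using Dr_transform[OF openU q _ has_derivative_mv[OF dAm has_derivative_const[of v]]] nabla_const by blast
  then have T2: "nabla g xi (nabla g (\<lambda>_. v) xi) q = Dr Am q (xi q) *v v + christoffel g q (Am q *v v) (xi q)"
    unfolding nabla_def[of g xi "nabla g (\<lambda>_. v) xi"] using nabla_const[OF q] christoffel_sym[OF q] by simp
  have T3: "nabla g (lie_bracket (\<lambda>_. v) xi) xi q = Am q *v Dr xi q v"
    unfolding nabla_def lie_bracket_def using nabla_xi[OF q, of "Dr xi q v"] Am_apply by simp
  have "christoffel g q (Am q *v v) (xi q) = Am q *v (Am q *v v) - Dr xi q (Am q *v v)"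
  proof -
    have e1: "Dr xi q (Am q *v v) + christoffel g q (Am q *v v) (xi q) = - (phi q *v (Am q *v v)) - phi q *v (h q *v (Am q *v v))"
      by (rule nabla_xi[OF q])
    have e2: "Am q *v (Am q *v v) = - (phi q *v (Am q *v v)) - phi q *v (h q *v (Am q *v v))"
      by (rule Am_apply)
    show ?thesis using e1 e2 by (metis add_diff_cancel_left')
  qed
  then show ?thesis unfolding curv_def T1 T2 T3 lie_apply[OF sm_xi q] by (simp add: algebra_simps)
qed

lemma lie_phi: "lie_tensor xi phi q = 2 *\<^sub>R h q"
  unfolding hten_def by simp

lemma lie_Am: "lie_tensor xi Am q = - (2 *\<^sub>R h q + (2 *\<^sub>R h q) ** h q + phi q ** lie_tensor xi (hten xi phi) q)"
proof -
  have "lie_tensor xi Am q = lie_tensor xi (\<lambda>y. - (phi y + phi y ** hten xi phi y)) q"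
    unfolding Am_def[abs_def] ..
  also have "\<dots> = - (lie_tensor xi phi q + lie_tensor xi (\<lambda>y. phi y ** hten xi phi y) q)"
    using lie_neg[of "\<lambda>y. phi y + phi y ** hten xi phi y"] lie_add[of phi q "\<lambda>y. phi y ** hten xi phi y"]
      differentiable_add[OF phi_diff[OF q] differentiable_mm[OF phi_diff[OF q] h_diff[OF q]]]
      phi_diff[OF q] differentiable_mm[OF phi_diff[OF q] h_diff[OF q]]
    by simp
  also have "\<dots> = - (2 *\<^sub>R h q + (2 *\<^sub>R h q) ** h q + phi q ** lie_tensor xi (hten xi phi) q)"
    using lie_mm[OF phi_diff[OF q] h_diff[OF q], of xi] lie_phi by (simp add: algebra_simps)
  finally show ?thesis .
qed

lemma eta_K: "eta q \<bullet> (lie_tensor xi (hten xi phi) q *v v) = 0"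
proof -
  have dh: "(hten xi phi has_derivative Dr (hten xi phi) q) (at q)"
    using h_diff[OF q] frechet_derivative_works by blast
  note D = has_derivative_inner[OF d_eta[OF q] has_derivative_mv[OF dh has_derivative_const[of v]]]
  from deriv_zero[OF openU q _ D, of 0 "xi q"]
  have e: "eta q \<bullet> (h q *v 0 + Dr (hten xi phi) q (xi q) *v v) + Dr eta q (xi q) \<bullet> (h q *v v) = 0"
    using eta_h by blast
  have "eta q \<bullet> (lie_tensor xi (hten xi phi) q *v v)
      = eta q \<bullet> (Dr (hten xi phi) q (xi q) *v v) - eta q \<bullet> Dr xi q (h q *v v)"
    unfolding lie_apply[OF sm_xi q] by (simp add: inner_add_right inner_diff_right eta_h[OF q])
  also have "\<dots> = - (Dr eta q (xi q) \<bullet> (h q *v v) + eta q \<bullet> Dr xi q (h q *v v))"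
    using e by simp
  also have "\<dots> = 0" by (simp add: lie_eta[OF q])
  finally show ?thesis .
qed

lemma K_anti: "lie_tensor xi (hten xi phi) q *v (phi q *v v) + phi q *v (lie_tensor xi (hten xi phi) q *v v)
   + 4 *\<^sub>R (h q *v (h q *v v)) = 0"
proof -
  have z: "lie_tensor xi (\<lambda>y. phi y ** h y + h y ** phi y) q = 0"
  proof (rule lie_zero[OF q])
    fix y assume "y \<in> U"
    then show "phi y ** h y + h y ** phi y = 0"
      unfolding matrix_eq using anti by (simp add: matrix_vector_mult_add_rdistrib matrix_vector_mul_assoc[symmetric])
  qed
  have "lie_tensor xi (\<lambda>y. phi y ** h y + h y ** phi y) q
     = lie_tensor xi phi q ** h q + phi q ** lie_tensor xi (hten xi phi) q
       + (lie_tensor xi (hten xi phi) q ** phi q + h q ** lie_tensor xi phi q)"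
    using lie_add[OF differentiable_mm[OF phi_diff[OF q] h_diff[OF q]] differentiable_mm[OF h_diff[OF q] phi_diff[OF q]], of xi]
      lie_mm[OF phi_diff[OF q] h_diff[OF q], of xi] lie_mm[OF h_diff[OF q] phi_diff[OF q], of xi]
    by simp
  then have "(lie_tensor xi phi q ** h q + phi q ** lie_tensor xi (hten xi phi) q
       + (lie_tensor xi (hten xi phi) q ** phi q + h q ** lie_tensor xi phi q)) *v v = 0"
    using z by simp
  then show ?thesis unfolding lie_phi
    by (simp add: matrix_vector_mult_add_rdistrib matrix_vector_mul_assoc[symmetric] mv_scaleR
        matrix_vector_mult_scaleR algebra_simps)
qed

end
end


lemma inner_eqI: "(\<And>c. (x::'a::real_inner) \<bullet> c = y \<bullet> c) \<Longrightarrow> x = y"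
proof -
  assume "\<And>c. x \<bullet> c = y \<bullet> c"
  from this[of "x - y"] have "(x - y) \<bullet> (x - y) = 0" by (simp add: inner_diff_left)
  then show "x = y" by simp
qed

lemmas inner_lin = inner_add_left inner_diff_left inner_scaleR_left inner_minus_left inner_zero_left

lemma alg_E1:
  fixes w PP H HH PK :: "'a::real_inner"
  assumes "w = - PP"
    "\<kappa> *\<^sub>R w + \<mu> *\<^sub>R H = 2 *\<^sub>R H + 2 *\<^sub>R HH + PK - (PP + HH)"
  shows "PK = (1 - \<kappa>) *\<^sub>R PP + (\<mu> - 2) *\<^sub>R H - HH"
proof (rule inner_eqI)
  fix c
  show "PK \<bullet> c = ((1 - \<kappa>) *\<^sub>R PP + (\<mu> - 2) *\<^sub>R H - HH) \<bullet> c"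
    using assms[THEN arg_cong[where f="\<lambda>x. x \<bullet> c"]] unfolding inner_lin by algebra
qed

lemma alg_E3:
  fixes KP PK HH PP H :: "'a::real_inner"
  assumes "KP + PK + 4 *\<^sub>R HH = 0"
    "KP = (1 - \<kappa>) *\<^sub>R PP - (\<mu> - 2) *\<^sub>R H - HH"
    "PK = (1 - \<kappa>) *\<^sub>R PP + (\<mu> - 2) *\<^sub>R H - HH"
  shows "HH = (\<kappa> - 1) *\<^sub>R PP"
proof (rule inner_eqI)
  fix c
  show "HH \<bullet> c = ((\<kappa> - 1) *\<^sub>R PP) \<bullet> c"
    using assms[THEN arg_cong[where f="\<lambda>x. x \<bullet> c"]] unfolding inner_lin by algebra
qed

lemma alg_E5:
  fixes PK HH PP H :: "'a::real_inner"
  assumes "PK = (1 - \<kappa>) *\<^sub>R PP + (\<mu> - 2) *\<^sub>R H - HH"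
    "HH = (\<kappa> - 1) *\<^sub>R PP"
  shows "PK = (2 * (1 - \<kappa>)) *\<^sub>R PP - (2 - \<mu>) *\<^sub>R H"
proof (rule inner_eqI)
  fix c
  show "PK \<bullet> c = ((2 * (1 - \<kappa>)) *\<^sub>R PP - (2 - \<mu>) *\<^sub>R H) \<bullet> c"
    using assms[THEN arg_cong[where f="\<lambda>x. x \<bullet> c"]] unfolding inner_lin by algebra
qed

lemma alg_KK:
  fixes KK PK PHK PP H :: "'a::real_inner"
  assumes "KK = (2 * (1 - \<kappa>)) *\<^sub>R PK + (2 - \<mu>) *\<^sub>R PHK"
    "PK = (2 * (1 - \<kappa>)) *\<^sub>R PP - (2 - \<mu>) *\<^sub>R H"
    "PHK = (2 * (1 - \<kappa>)) *\<^sub>R H + ((2 - \<mu>) * (\<kappa> - 1)) *\<^sub>R PP"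
  shows "KK = (4 * (1 - \<kappa>)^2 - (2 - \<mu>)^2 * (1 - \<kappa>)) *\<^sub>R PP"
proof (rule inner_eqI)
  fix c
  show "KK \<bullet> c = ((4 * (1 - \<kappa>)^2 - (2 - \<mu>)^2 * (1 - \<kappa>)) *\<^sub>R PP) \<bullet> c"
    using assms[THEN arg_cong[where f="\<lambda>x. x \<bullet> c"]] unfolding inner_lin by algebra
qed

lemma alg_HHPK:
  fixes PK HH PP H :: "'a::real_inner"
  assumes "PK = (2 * (1 - \<kappa>)) *\<^sub>R PP - (2 - \<mu>) *\<^sub>R H"
    "HH = (\<kappa> - 1) *\<^sub>R PP"
  shows "2 *\<^sub>R HH + PK = - ((2 - \<mu>) *\<^sub>R H)"
proof (rule inner_eqI)
  fix c
  show "(2 *\<^sub>R HH + PK) \<bullet> c = (- ((2 - \<mu>) *\<^sub>R H)) \<bullet> c"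
    using assms[THEN arg_cong[where f="\<lambda>x. x \<bullet> c"]] unfolding inner_lin by algebra
qed

lemma alg_E4:
  fixes K P PH PHH :: "'a::real_inner"
  assumes "K = (1 - \<kappa>) *\<^sub>R P - (\<mu> - 2) *\<^sub>R PH + PHH"
    "PHH = (1 - \<kappa>) *\<^sub>R P"
  shows "K = (2 * (1 - \<kappa>)) *\<^sub>R P + (2 - \<mu>) *\<^sub>R PH"
proof (rule inner_eqI)
  fix c
  show "K \<bullet> c = ((2 * (1 - \<kappa>)) *\<^sub>R P + (2 - \<mu>) *\<^sub>R PH) \<bullet> c"
    using assms[THEN arg_cong[where f="\<lambda>x. x \<bullet> c"]] unfolding inner_lin by algebra
qed

lemma alg_E2:
  fixes K PPK PPP PH PHH P :: "'a::real_inner"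
  assumes "PPK = (1 - \<kappa>) *\<^sub>R PPP + (\<mu> - 2) *\<^sub>R PH - PHH"
    "PPK = - K"
    "PPP = - P"
  shows "K = (1 - \<kappa>) *\<^sub>R P - (\<mu> - 2) *\<^sub>R PH + PHH"
proof (rule inner_eqI)
  fix c
  show "K \<bullet> c = ((1 - \<kappa>) *\<^sub>R P - (\<mu> - 2) *\<^sub>R PH + PHH) \<bullet> c"
    using assms[THEN arg_cong[where f="\<lambda>x. x \<bullet> c"]] unfolding inner_lin by algebra
qed

locale cmskm = cms U eta xi phi g
  for U :: "(real^'n) set" and eta xi :: "real^'n \<Rightarrow> real^'n" and phi g :: "real^'n \<Rightarrow> real^'n^'n" +
  fixes \<kappa> \<mu> :: real
  assumes km: "weak_kappa_mu U eta xi phi g \<kappa> \<mu>"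
begin

definition K where "K q = lie_tensor xi (hten xi phi) q"

context
  fixes q assumes q: "q \<in> U"
begin

lemma PPH: "phi q *v (phi q *v (h q *v v)) = - (h q *v v)"
  by (simp add: phi2[OF q] eta_h[OF q])

lemma HPw: "h q *v (phi q *v w) = - (phi q *v (h q *v w))"
  using anti[OF q, of w] by (simp add: eq_neg_iff_add_eq_0 add.commute)

lemma HPP: "h q *v (phi q *v (phi q *v v)) = - (h q *v v)"
  by (simp add: phi2[OF q] h_xi[OF q] matrix_vector_right_distrib matrix_vector_mult_scaleR mv_neg_right
      matrix_vector_mult_diff_distrib)

lemma PHP: "phi q *v (h q *v (phi q *v v)) = h q *v v"
  using HPw[of "phi q *v v"] HPP by (simp add: mv_neg_right)

lemma PPP: "phi q *v (phi q *v (phi q *v v)) = - (phi q *v v)"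
  by (simp add: phi2[OF q] phi_xi[OF q] matrix_vector_right_distrib matrix_vector_mult_scaleR mv_neg_right
      matrix_vector_mult_diff_distrib)

lemma PPK: "phi q *v (phi q *v (K q *v v)) = - (K q *v v)"
  unfolding K_def by (simp add: phi2[OF q] eta_K[OF q])

lemma AmAm: "Am q *v (Am q *v v) = phi q *v (phi q *v v) + h q *v (h q *v v)"
proof -
  have "Am q *v (Am q *v v) = phi q *v (phi q *v v) + phi q *v (phi q *v (h q *v v))
       + phi q *v (h q *v (phi q *v v)) + phi q *v (h q *v (phi q *v (h q *v v)))"
    by (simp add: Am_apply matrix_vector_right_distrib matrix_vector_mult_diff_distrib mv_neg_right algebra_simps)
  then show ?thesis by (simp add: PPH PHP)
qed

lemma ell: "\<kappa> *\<^sub>R (v - (eta q \<bullet> v) *\<^sub>R xi q) + \<mu> *\<^sub>R (h q *v v)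
   = 2 *\<^sub>R (h q *v v) + 2 *\<^sub>R (h q *v (h q *v v)) + phi q *v (K q *v v) - Am q *v (Am q *v v)"
proof -
  have "curv g (\<lambda>_. v) xi xi q = \<kappa> *\<^sub>R (v - (eta q \<bullet> v) *\<^sub>R xi q) + \<mu> *\<^sub>R (h q *v v)"
    using km smooth_const[of U v] q unfolding weak_kappa_mu_def by auto
  moreover have "curv g (\<lambda>_. v) xi xi q
     = 2 *\<^sub>R (h q *v v) + 2 *\<^sub>R (h q *v (h q *v v)) + phi q *v (K q *v v) - Am q *v (Am q *v v)"
    unfolding curv_formula[OF q] lie_Am[OF q] K_def
    by (simp add: mv_neg mv_scaleR matrix_vector_mult_add_rdistrib matrix_vector_mult_diff_rdistrib
        matrix_vector_mul_assoc[symmetric] matrix_vector_mult_scaleR)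
  ultimately show ?thesis by simp
qed

lemma E1: "phi q *v (K q *v v) = (1 - \<kappa>) *\<^sub>R (phi q *v (phi q *v v)) + (\<mu> - 2) *\<^sub>R (h q *v v) - h q *v (h q *v v)"
proof -
  have "v - (eta q \<bullet> v) *\<^sub>R xi q = - (phi q *v (phi q *v v))" by (simp add: phi2[OF q])
  then show ?thesis using ell[of v] unfolding AmAm
    by (rule alg_E1)
qed

lemma E2: "K q *v v = (1 - \<kappa>) *\<^sub>R (phi q *v v) - (\<mu> - 2) *\<^sub>R (phi q *v (h q *v v)) + phi q *v (h q *v (h q *v v))"
proof -
  have "phi q *v (phi q *v (K q *v v)) = (1 - \<kappa>) *\<^sub>R (phi q *v (phi q *v (phi q *v v)))
      + (\<mu> - 2) *\<^sub>R (phi q *v (h q *v v)) - phi q *v (h q *v (h q *v v))"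
    unfolding E1 by (simp add: matrix_vector_right_distrib matrix_vector_mult_diff_distrib matrix_vector_mult_scaleR)
  then show ?thesis using PPK PPP by (rule alg_E2)
qed

lemma HHP: "h q *v (h q *v (phi q *v v)) = phi q *v (h q *v (h q *v v))"
  using HPw[of v] HPw[of "h q *v v"] by (simp add: mv_neg_right)

lemma E3: "h q *v (h q *v v) = (\<kappa> - 1) *\<^sub>R (phi q *v (phi q *v v))"
proof -
  have KP: "K q *v (phi q *v v) = (1 - \<kappa>) *\<^sub>R (phi q *v (phi q *v v)) - (\<mu> - 2) *\<^sub>R (h q *v v) - h q *v (h q *v v)"
    unfolding E2[of "phi q *v v"] HHP PHP PPH by simp
  have "K q *v (phi q *v v) + phi q *v (K q *v v) + 4 *\<^sub>R (h q *v (h q *v v)) = 0"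
    using K_anti[OF q, of v] unfolding K_def .
  then show ?thesis using KP E1 by (rule alg_E3)
qed

lemma E4: "K q *v v = (2 * (1 - \<kappa>)) *\<^sub>R (phi q *v v) + (2 - \<mu>) *\<^sub>R (phi q *v (h q *v v))"
proof -
  have "phi q *v (h q *v (h q *v v)) = (1 - \<kappa>) *\<^sub>R (phi q *v v)"
    unfolding E3 by (simp add: matrix_vector_mult_scaleR PPP algebra_simps)
  then show ?thesis using E2[of v] by (intro alg_E4)
qed

lemma E5: "phi q *v (K q *v v) = (2 * (1 - \<kappa>)) *\<^sub>R (phi q *v (phi q *v v)) - (2 - \<mu>) *\<^sub>R (h q *v v)"
  using E1 E3 by (rule alg_E5)

lemma KK: "K q *v (K q *v v) = (4 * (1 - \<kappa>)^2 - (2 - \<mu>)^2 * (1 - \<kappa>)) *\<^sub>R (phi q *v (phi q *v v))"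
proof -
  have a: "phi q *v (h q *v (K q *v v)) = (2 * (1 - \<kappa>)) *\<^sub>R (h q *v v) + ((2 - \<mu>) * (\<kappa> - 1)) *\<^sub>R (phi q *v (phi q *v v))"
  proof -
    have "phi q *v (h q *v (K q *v v)) = - (h q *v (phi q *v (K q *v v)))"
      using HPw[of "K q *v v"] by simp
    also have "\<dots> = (2 * (1 - \<kappa>)) *\<^sub>R (h q *v v) + (2 - \<mu>) *\<^sub>R (h q *v (h q *v v))"
      unfolding E5 by (simp add: matrix_vector_mult_diff_distrib matrix_vector_mult_scaleR HPP)
    also have "\<dots> = (2 * (1 - \<kappa>)) *\<^sub>R (h q *v v) + ((2 - \<mu>) * (\<kappa> - 1)) *\<^sub>R (phi q *v (phi q *v v))"
      unfolding E3 by simp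
    finally show ?thesis .
  qed
  show ?thesis using E4[of "K q *v v"] E5 a by (rule alg_KK)
qed

lemma HH_PK: "2 *\<^sub>R (h q *v (h q *v v)) + phi q *v (K q *v v) = - ((2 - \<mu>) *\<^sub>R (h q *v v))"
  using E5 E3 by (rule alg_HHPK)

end
end



lemma alg_fin:
  fixes HH PK H :: "'a::real_inner"
  assumes "2 *\<^sub>R HH + PK = - ((2 - \<mu>) *\<^sub>R H)"
  shows "((1/2) * c) *\<^sub>R ((2 - \<mu>) *\<^sub>R (2 *\<^sub>R HH + PK) + (2 * (1 - \<kappa>) * 2) *\<^sub>R H)
    = ((1/2) * (c * ((2 - \<mu>) * (- (2 - \<mu>)) + 2 * (1 - \<kappa>) * 2))) *\<^sub>R H"
proof (rule inner_eqI)
  fix c'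
  show "(((1/2) * c) *\<^sub>R ((2 - \<mu>) *\<^sub>R (2 *\<^sub>R HH + PK) + (2 * (1 - \<kappa>) * 2) *\<^sub>R H)) \<bullet> c'
    = (((1/2) * (c * ((2 - \<mu>) * (- (2 - \<mu>)) + 2 * (1 - \<kappa>) * 2))) *\<^sub>R H) \<bullet> c'"
    using assms[THEN arg_cong[where f="\<lambda>x. x \<bullet> c'"]] unfolding inner_lin by algebra
qed

context cmskm
begin

lemma P_skew: "q \<in> U \<Longrightarrow> v \<bullet> (g q *v (phi q *v w)) = - ((phi q *v v) \<bullet> (g q *v w))"
proof -
  assume q: "q \<in> U"
  have "d_form eta q v w = - d_form eta q w v" unfolding d_form_def by simp
  then have "v \<bullet> (g q *v (phi q *v w)) = - (w \<bullet> (g q *v (phi q *v v)))"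
    using deta_phi[OF q, of v w] deta_phi[OF q, of w v] by simp
  then show ?thesis using gs[OF q, of w "phi q *v v"] by simp
qed

lemma PH_sym: "q \<in> U \<Longrightarrow> v \<bullet> (g q *v (phi q *v (h q *v w))) = w \<bullet> (g q *v (phi q *v (h q *v v)))"
  using G_sym[of q v w] G_formula[of q v w] G_formula[of q w v] by simp

lemma H_sym: "q \<in> U \<Longrightarrow> (h q *v v) \<bullet> (g q *v w) = v \<bullet> (g q *v (h q *v w))"
proof -
  assume q: "q \<in> U"
  have "(h q *v v) \<bullet> (g q *v w) = - ((phi q *v (phi q *v (h q *v v))) \<bullet> (g q *v w))"
    using PPH[OF q, of v] by simp
  also have "\<dots> = (phi q *v (h q *v v)) \<bullet> (g q *v (phi q *v w))"
    using P_skew[OF q, of "phi q *v (h q *v v)" w] by simp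
  also have "\<dots> = (phi q *v w) \<bullet> (g q *v (phi q *v (h q *v v)))"
    by (rule gs[OF q])
  also have "\<dots> = v \<bullet> (g q *v (phi q *v (h q *v (phi q *v w))))"
    by (rule PH_sym[OF q, symmetric])
  also have "\<dots> = v \<bullet> (g q *v (h q *v w))" by (simp add: PHP[OF q])
  finally show ?thesis .
qed

lemma kappa_lt1:
  assumes "\<exists>p\<in>U. hten xi phi p \<noteq> 0"
  shows "\<kappa> < 1"
proof -
  obtain p where p: "p \<in> U" "h p \<noteq> 0" using assms by blast
  then obtain v where v: "h p *v v \<noteq> 0" unfolding matrix_eq by auto
  have pos: "0 < (h p *v v) \<bullet> (g p *v (h p *v v))" using gpos[OF p(1) v] .
  have a: "0 \<le> (phi p *v v) \<bullet> (g p *v (phi p *v v))"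
    using gpos[OF p(1), of "phi p *v v"] by (cases "phi p *v v = 0") auto
  have "(h p *v v) \<bullet> (g p *v (h p *v v)) = v \<bullet> (g p *v (h p *v (h p *v v)))" by (rule H_sym[OF p(1)])
  also have "\<dots> = (\<kappa> - 1) * (v \<bullet> (g p *v (phi p *v (phi p *v v))))"
    by (simp add: E3[OF p(1)] matrix_vector_mult_scaleR)
  also have "\<dots> = (\<kappa> - 1) * (- ((phi p *v v) \<bullet> (g p *v (phi p *v v))))"
    using P_skew[OF p(1), of v "phi p *v v"] by simp
  finally have "0 < (\<kappa> - 1) * (- ((phi p *v v) \<bullet> (g p *v (phi p *v v))))" using pos by simp
  then show ?thesis using a
    by (metis diff_ge_0_iff_ge linorder_not_le mult_nonneg_nonpos neg_le_0_iff_le)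
qed

end

theorem proposition5:
  fixes U :: "(real^'n) set"
    and eta xi :: "real^'n \<Rightarrow> real^'n"
    and phi g :: "real^'n \<Rightarrow> real^'n^'n"
    and \<kappa> \<mu> :: real
  assumes cm: "contact_metric_on U eta xi phi g"
    and nonK: "\<exists>p\<in>U. hten xi phi p \<noteq> 0"
    and km: "weak_kappa_mu U eta xi phi g \<kappa> \<mu>"
    and boeckx: "\<bar>(1 - \<mu>/2) / sqrt (1 - \<kappa>)\<bar> < 1"
  defines "I \<equiv> (1 - \<mu>/2) / sqrt (1 - \<kappa>)"
    and "phi1 \<equiv> (\<lambda>p. ((1 / sqrt (1 - \<kappa> - (1 - \<mu>/2)^2)) * (1 / (2 * sqrt (1 - \<kappa>))))
                     *\<^sub>R ((2 - \<mu>) *\<^sub>R (phi p ** hten xi phi p) + (2 * (1 - \<kappa>)) *\<^sub>R phi p))"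
  shows "(\<forall>p\<in>U. \<forall>v. phi1 p *v (phi1 p *v v) = - v + (eta p \<bullet> v) *\<^sub>R xi p)
       \<and> (\<forall>p\<in>U. (1/2) *\<^sub>R lie_tensor xi phi1 p = sqrt (1 - I^2) *\<^sub>R hten xi phi p)"
proof -
  interpret cmskm U eta xi phi g \<kappa> \<mu>
    using cm km by (unfold_locales) auto
  have k1: "\<kappa> < 1" using kappa_lt1[OF nonK] .
  define k where "k = 1 - \<kappa>"
  define m where "m = 1 - \<mu>/2"
  have kpos: "k > 0" using k1 unfolding k_def by simp
  have skpos: "sqrt k > 0" using kpos by simp
  have "\<bar>m\<bar> / sqrt k < 1" using boeckx skpos unfolding k_def m_def by (simp add: abs_divide)
  then have am: "\<bar>m\<bar> < sqrt k" using skpos by (simp add: divide_less_eq)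
  have "\<bar>m\<bar>^2 < (sqrt k)^2" by (rule power_strict_mono[OF am]) auto
  then have msq: "m^2 < k" using kpos by simp
  define Dd where "Dd = k - m^2"
  have Ddpos: "Dd > 0" using msq unfolding Dd_def by simp
  have sDd: "sqrt Dd > 0" using Ddpos by simp
  define c where "c = (1 / sqrt (1 - \<kappa> - (1 - \<mu>/2)^2)) * (1 / (2 * sqrt (1 - \<kappa>)))"
  have c_eq: "c = 1 / (2 * sqrt Dd * sqrt k)" unfolding c_def Dd_def k_def m_def by simp
  have phi1_eq: "phi1 = (\<lambda>p. c *\<^sub>R ((2 - \<mu>) *\<^sub>R (phi p ** h p) + (2 * (1 - \<kappa>)) *\<^sub>R phi p))"
    unfolding assms(6) c_def ..
  have phi1_apply: "phi1 p *v v = c *\<^sub>R (K p *v v)" if p: "p \<in> U" for p v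
    unfolding phi1_eq E4[OF p]
    by (simp add: mv_scaleR matrix_vector_mult_add_rdistrib matrix_vector_mul_assoc[symmetric] add.commute)
  have sc1: "c * c * (4 * (1 - \<kappa>)^2 - (2 - \<mu>)^2 * (1 - \<kappa>)) = 1"
  proof -
    have "(2 - \<mu>)^2 = 4 * m^2" unfolding m_def by (simp add: power2_eq_square algebra_simps)
    then have "4 * (1 - \<kappa>)^2 - (2 - \<mu>)^2 * (1 - \<kappa>) = 4 * k * Dd"
      unfolding Dd_def k_def by (simp add: power2_eq_square algebra_simps)
    moreover have "c * c = 1 / (4 * Dd * k)"
      unfolding c_eq using sDd skpos Ddpos kpos
      by (simp add: field_simps power2_eq_square[symmetric])
    ultimately show ?thesis using Ddpos kpos by simp
  qed
  have part1: "\<forall>p\<in>U. \<forall>v. phi1 p *v (phi1 p *v v) = - v + (eta p \<bullet> v) *\<^sub>R xi p"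
  proof (intro ballI allI)
    fix p v assume p: "p \<in> U"
    have "phi1 p *v (phi1 p *v v) = (c * c) *\<^sub>R (K p *v (K p *v v))"
      by (simp add: phi1_apply[OF p] matrix_vector_mult_scaleR)
    also have "\<dots> = phi p *v (phi p *v v)"
      unfolding KK[OF p] using sc1 by simp
    also have "\<dots> = - v + (eta p \<bullet> v) *\<^sub>R xi p" by (rule phi2[OF p])
    finally show "phi1 p *v (phi1 p *v v) = - v + (eta p \<bullet> v) *\<^sub>R xi p" .
  qed
  have sc2: "(1/2) * (c * ((2 - \<mu>) * (- (2 - \<mu>)) + 2 * (1 - \<kappa>) * 2)) = sqrt (1 - I^2)"
  proof -
    have "(2 - \<mu>) * (- (2 - \<mu>)) + 2 * (1 - \<kappa>) * 2 = 4 * Dd"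
      unfolding Dd_def k_def m_def by (simp add: power2_eq_square algebra_simps)
    then have "(1/2) * (c * ((2 - \<mu>) * (- (2 - \<mu>)) + 2 * (1 - \<kappa>) * 2)) = sqrt Dd / sqrt k"
      unfolding c_eq using sDd skpos Ddpos
      by (simp add: field_simps)
    also have "\<dots> = sqrt (1 - I^2)"
    proof -
      have "1 - I^2 = Dd / k"
        unfolding assms(5) Dd_def using kpos unfolding k_def m_def
        by (simp add: power_divide field_simps)
      then show ?thesis by (simp add: real_sqrt_divide)
    qed
    finally show ?thesis .
  qed
  have part2: "\<forall>p\<in>U. (1/2) *\<^sub>R lie_tensor xi phi1 p = sqrt (1 - I^2) *\<^sub>R hten xi phi p"
  proof
    fix p assume p: "p \<in> U"
    have dph: "(\<lambda>p. phi p ** h p) differentiable (at p)"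
      by (rule differentiable_mm[OF phi_diff[OF p] h_diff[OF p]])
    have dsum: "(\<lambda>p. (2 - \<mu>) *\<^sub>R (phi p ** h p) + (2 * (1 - \<kappa>)) *\<^sub>R phi p) differentiable (at p)"
      by (intro differentiable_add differentiable_scaleR differentiable_const dph phi_diff[OF p])
    have "lie_tensor xi phi1 p = c *\<^sub>R ((2 - \<mu>) *\<^sub>R lie_tensor xi (\<lambda>p. phi p ** h p) p
          + (2 * (1 - \<kappa>)) *\<^sub>R lie_tensor xi phi p)"
      unfolding phi1_eq lie_scale[OF dsum]
      using lie_add[OF differentiable_scaleR[OF differentiable_const dph] differentiable_scaleR[OF differentiable_const phi_diff[OF p]], of xi]
        lie_scale[OF dph, of xi "2 - \<mu>"] lie_scale[OF phi_diff[OF p], of xi "2 * (1 - \<kappa>)"]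
      by simp
    also have "\<dots> = c *\<^sub>R ((2 - \<mu>) *\<^sub>R ((2 *\<^sub>R h p) ** h p + phi p ** K p) + (2 * (1 - \<kappa>)) *\<^sub>R (2 *\<^sub>R h p))"
      unfolding lie_mm[OF phi_diff[OF p] h_diff[OF p]] lie_phi[OF p] K_def ..
    finally have L: "lie_tensor xi phi1 p = \<dots>" .
    show "(1/2) *\<^sub>R lie_tensor xi phi1 p = sqrt (1 - I^2) *\<^sub>R hten xi phi p"
      unfolding matrix_eq
    proof
      fix v
      have "(1/2) *\<^sub>R lie_tensor xi phi1 p *v v
          = ((1/2) * c) *\<^sub>R ((2 - \<mu>) *\<^sub>R (2 *\<^sub>R (h p *v (h p *v v)) + phi p *v (K p *v v))
              + (2 * (1 - \<kappa>) * 2) *\<^sub>R (h p *v v))"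
        unfolding L by (simp add: mv_scaleR matrix_vector_mult_add_rdistrib matrix_vector_mul_assoc[symmetric])
      also have "\<dots> = ((1/2) * (c * ((2 - \<mu>) * (- (2 - \<mu>)) + 2 * (1 - \<kappa>) * 2))) *\<^sub>R (h p *v v)"
        using HH_PK[OF p, of v] by (rule alg_fin)
      also have "\<dots> = sqrt (1 - I^2) *\<^sub>R hten xi phi p *v v"
        unfolding sc2 by (simp add: mv_scaleR)
      finally show "(1/2) *\<^sub>R lie_tensor xi phi1 p *v v = sqrt (1 - I^2) *\<^sub>R hten xi phi p *v v" .
    qed
  qed
  show ?thesis using part1 part2 by blast
qed


end
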